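(* Let $(S,\mathrm{dist})$ be a finite metric space with $\operatorname{diam}(S)=1$, partitioned as $S=S_+\cup S_-$, with margin $\gamma=\min_{x\in S_+,y\in S_-}\mathrm{dist}(x,y)\in(0,1)$. Let $N_0\subset S$ be a $\gamma$-net of $S$. Run the following pruning procedure on a set $N$ initialized to $N_0$: for $i=0,-1,-2,\dots,\lceil\log_2\gamma\rceil$ (in this order), and for each point $p$ that is in the current set $N$ (processed one at a time), if the distance from $p$ to every point of $N$ with label opposite to that of $p$ is at least $2\cdot 2^i$ (vacuously true if there is no such point), then remove from $N$ every point $q\neq p$ with $\mathrm{dist}(p,q)<2^i-\gamma$. Then the final set $N$ is consistent with $S$.
   Context: A $\gamma$-net of $S$ is a subset $N_0\subset S$ whose distinct points are pairwise at distance $\ge\gamma$ and such that every point of $S$ is at distance strictly less than $\gamma$ from some point of $N_0$. A subset $S'\subset S$ is consistent with $S$ if for every $p\in S$, every nearest neighbor of $p$ in $S'$ belongs to the same class ($S_+$ or $S_-$) as $p$. *)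

theory Defs
  imports "HOL-Analysis.Analysis"
begin

definition is_net :: "real \<Rightarrow> 'a::metric_space set \<Rightarrow> 'a set \<Rightarrow> bool" where
  "is_net \<gamma> S N0 \<longleftrightarrow> N0 \<subseteq> S
     \<and> (\<forall>x\<in>N0. \<forall>y\<in>N0. x \<noteq> y \<longrightarrow> dist x y \<ge> \<gamma>)
     \<and> (\<forall>p\<in>S. \<exists>x\<in>N0. dist p x < \<gamma>)"

definition nearest_neighbor :: "'a::metric_space set \<Rightarrow> 'a \<Rightarrow> 'a \<Rightarrow> bool" where
  "nearest_neighbor S' p q \<longleftrightarrow> q \<in> S' \<and> (\<forall>q'\<in>S'. dist p q \<le> dist p q')"

definition consistent :: "'a::metric_space set \<Rightarrow> 'a set \<Rightarrow> 'a set \<Rightarrow> bool" where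
  "consistent Sp Sm S' \<longleftrightarrow>
     (\<forall>p\<in>Sp \<union> Sm. \<forall>q. nearest_neighbor S' p q \<longrightarrow>
        ((p \<in> Sp \<and> q \<in> Sp) \<or> (p \<in> Sm \<and> q \<in> Sm)))"

definition opposite :: "'a set \<Rightarrow> 'a set \<Rightarrow> 'a \<Rightarrow> 'a set" where
  "opposite Sp Sm p = (if p \<in> Sp then Sm else Sp)"

definition process_point :: "real \<Rightarrow> 'a::metric_space set \<Rightarrow> 'a set \<Rightarrow> int \<Rightarrow> 'a set \<Rightarrow> 'a \<Rightarrow> 'a set" where
  "process_point \<gamma> Sp Sm i N p =
     (if p \<in> N \<and> (\<forall>q\<in>N \<inter> opposite Sp Sm p. dist p q \<ge> 2 * 2 powr (real_of_int i))
      then N - {q. q \<noteq> p \<and> dist p q < 2 powr (real_of_int i) - \<gamma>}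
      else N)"

definition prune_round :: "real \<Rightarrow> 'a::metric_space set \<Rightarrow> 'a set \<Rightarrow> int \<Rightarrow> 'a list \<Rightarrow> 'a set \<Rightarrow> 'a set" where
  "prune_round \<gamma> Sp Sm i ps N = foldl (process_point \<gamma> Sp Sm i) N ps"

text \<open>pruning_run \<gamma> Sp Sm c i N N': starting with N at round i, running rounds
  i, i-1, ..., c (for arbitrary processing orders of the points present at the
  start of each round) can end with N'.\<close>
inductive pruning_run :: "real \<Rightarrow> 'a::metric_space set \<Rightarrow> 'a set \<Rightarrow> int \<Rightarrow> int \<Rightarrow> 'a set \<Rightarrow> 'a set \<Rightarrow> bool"
  for \<gamma> Sp Sm c where
  stop: "i < c \<Longrightarrow> pruning_run \<gamma> Sp Sm c i N N"
| step: "\<lbrakk>c \<le> i; distinct ps; set ps = N;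
          pruning_run \<gamma> Sp Sm c (i - 1) (prune_round \<gamma> Sp Sm i ps N) N'\<rbrakk>
         \<Longrightarrow> pruning_run \<gamma> Sp Sm c i N N'"

end

theory Submission
  imports Defs
begin

definition wit :: "real \<Rightarrow> 'a::metric_space set \<Rightarrow> 'a set \<Rightarrow> real \<Rightarrow> 'a set \<Rightarrow> 'a \<Rightarrow> 'a \<Rightarrow> real \<Rightarrow> bool" where
  "wit \<gamma> Sp Sm R N x p r \<longleftrightarrow> p \<in> N \<and> R \<le> r \<and> dist p x < r - \<gamma> \<and> (p \<in> Sp \<longleftrightarrow> x \<in> Sp)
     \<and> (\<forall>q\<in>N \<inter> opposite Sp Sm p. 2 * r \<le> dist p q)
     \<and> (\<forall>q\<in>N. q \<noteq> p \<longrightarrow> r - \<gamma> \<le> dist p q)"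

definition Inv :: "real \<Rightarrow> 'a::metric_space set \<Rightarrow> 'a set \<Rightarrow> 'a set \<Rightarrow> real \<Rightarrow> 'a set \<Rightarrow> bool" where
  "Inv \<gamma> Sp Sm N0 R N \<longleftrightarrow> N \<subseteq> N0 \<and> (\<forall>x\<in>N0. x \<in> N \<or> (\<exists>p r. wit \<gamma> Sp Sm R N x p r))"

lemma wit_mono: "R' \<le> R \<Longrightarrow> wit \<gamma> Sp Sm R N x p r \<Longrightarrow> wit \<gamma> Sp Sm R' N x p r"
  unfolding wit_def by auto

lemma Inv_mono: "R' \<le> R \<Longrightarrow> Inv \<gamma> Sp Sm N0 R N \<Longrightarrow> Inv \<gamma> Sp Sm N0 R' N"
  unfolding Inv_def using wit_mono by blast

lemma Inv_process:
  assumes I: "Inv \<gamma> Sp Sm N0 (2 powr real_of_int i) N" and g: "0 < \<gamma>"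
    and N0: "N0 \<subseteq> Sp \<union> Sm" and dj: "Sp \<inter> Sm = {}"
  shows "Inv \<gamma> Sp Sm N0 (2 powr real_of_int i) (process_point \<gamma> Sp Sm i N p)"
proof (cases "p \<in> N \<and> (\<forall>q\<in>N \<inter> opposite Sp Sm p. dist p q \<ge> 2 * 2 powr (real_of_int i))")
  case False
  have "process_point \<gamma> Sp Sm i N p = N"
    unfolding process_point_def by (rule if_not_P[OF False])
  then show ?thesis using I by simp
next
  case True
  note qual = True
  define R where "R = 2 powr real_of_int i"
  define N' where "N' = N - {q. q \<noteq> p \<and> dist p q < R - \<gamma>}"
  have PP: "process_point \<gamma> Sp Sm i N p = N'"
    using True unfolding process_point_def N'_def R_def by simp
  have Rpos: "R > 0" unfolding R_def by simp
  have sub: "N' \<subseteq> N" unfolding N'_def by blast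
  have pN': "p \<in> N'" using True unfolding N'_def by blast
  have "\<forall>x\<in>N0. x \<in> N' \<or> (\<exists>p r. wit \<gamma> Sp Sm R N' x p r)"
  proof
    fix x assume x: "x \<in> N0"
    show "x \<in> N' \<or> (\<exists>p r. wit \<gamma> Sp Sm R N' x p r)"
    proof (cases "x \<in> N")
      case True
      show ?thesis
      proof (cases "x \<in> N'")
        case False
        then have xp: "x \<noteq> p" "dist p x < R - \<gamma>" using True unfolding N'_def by auto
        have "p \<in> Sp \<longleftrightarrow> x \<in> Sp"
        proof (rule ccontr)
          assume ne: "\<not> (p \<in> Sp \<longleftrightarrow> x \<in> Sp)"
          have "x \<in> Sp \<union> Sm" using x N0 by blast
          with ne dj have "x \<in> opposite Sp Sm p" unfolding opposite_def by auto
          with qual \<open>x \<in> N\<close> have "dist p x \<ge> 2 * R" unfolding R_def by blast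
          with xp g Rpos show False by linarith
        qed
        moreover have "\<forall>q\<in>N' \<inter> opposite Sp Sm p. 2 * R \<le> dist p q"
          using qual sub unfolding R_def by blast
        moreover have "\<forall>q\<in>N'. q \<noteq> p \<longrightarrow> R - \<gamma> \<le> dist p q"
          unfolding N'_def by auto
        ultimately have "wit \<gamma> Sp Sm R N' x p R"
          unfolding wit_def using pN' xp by auto
        then show ?thesis by blast
      qed simp
    next
      case False
      with I x obtain p0 r where w: "wit \<gamma> Sp Sm R N x p0 r"
        unfolding Inv_def R_def by blast
      have "p0 \<in> N'"
      proof (rule ccontr)
        assume "p0 \<notin> N'"
        with w have "p0 \<noteq> p" "dist p p0 < R - \<gamma>" unfolding N'_def wit_def by auto
        moreover have "r - \<gamma> \<le> dist p0 p" using w True \<open>p0 \<noteq> p\<close> unfolding wit_def by auto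
        moreover have "R \<le> r" using w unfolding wit_def by auto
        ultimately show False by (simp add: dist_commute)
      qed
      with w sub have "wit \<gamma> Sp Sm R N' x p0 r" unfolding wit_def by blast
      then show ?thesis by blast
    qed
  qed
  moreover have "N' \<subseteq> N0" using I sub unfolding Inv_def by blast
  ultimately show ?thesis unfolding PP Inv_def R_def by blast
qed

lemma Inv_foldl:
  assumes "Inv \<gamma> Sp Sm N0 (2 powr real_of_int i) N" "0 < \<gamma>" "N0 \<subseteq> Sp \<union> Sm" "Sp \<inter> Sm = {}"
  shows "Inv \<gamma> Sp Sm N0 (2 powr real_of_int i) (foldl (process_point \<gamma> Sp Sm i) N ps)"
  using assms(1)
proof (induction ps arbitrary: N)
  case Nil then show ?case by simp
next
  case (Cons a ps)
  show ?case using Cons.IH[OF Inv_process[OF Cons.prems assms(2-4)]] by simp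
qed

lemma Inv_run:
  assumes "pruning_run \<gamma> Sp Sm c i N N'"
    and "0 < \<gamma>" "N0 \<subseteq> Sp \<union> Sm" "Sp \<inter> Sm = {}"
  shows "Inv \<gamma> Sp Sm N0 (2 powr real_of_int i) N \<Longrightarrow> \<exists>R. Inv \<gamma> Sp Sm N0 R N'"
  using assms(1)
proof (induction rule: pruning_run.induct)
  case (stop i N) then show ?case by blast
next
  case (step i ps N N')
  have "Inv \<gamma> Sp Sm N0 (2 powr real_of_int i) (prune_round \<gamma> Sp Sm i ps N)"
    unfolding prune_round_def using Inv_foldl[OF step.prems assms(2-4)] .
  moreover have "2 powr real_of_int (i - 1) \<le> 2 powr real_of_int i" by simp
  ultimately show ?case using step.IH Inv_mono by blast
qed

theorem lemma1:
  fixes S Sp Sm N0 N :: "'a::metric_space set" and \<gamma> :: real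
  assumes "finite S"
    and "diameter S = 1"
    and "S = Sp \<union> Sm" and "Sp \<inter> Sm = {}"
    and "Sp \<noteq> {}" and "Sm \<noteq> {}"
    and "\<gamma> = Min {dist x y | x y. x \<in> Sp \<and> y \<in> Sm}"
    and "0 < \<gamma>" and "\<gamma> < 1"
    and "is_net \<gamma> S N0"
    and "pruning_run \<gamma> Sp Sm \<lceil>log 2 \<gamma>\<rceil> 0 N0 N"
  shows "consistent Sp Sm N"
proof -
  have fin: "finite {dist x y | x y. x \<in> Sp \<and> y \<in> Sm}"
  proof -
    have "{dist x y | x y. x \<in> Sp \<and> y \<in> Sm} = (\<lambda>(x,y). dist x y) ` (Sp \<times> Sm)" by auto
    moreover have "finite (Sp \<times> Sm)" using assms(1,3) by auto
    ultimately show ?thesis by simp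
  qed
  have marg: "\<And>a b. a \<in> Sp \<Longrightarrow> b \<in> Sm \<Longrightarrow> \<gamma> \<le> dist a b"
    using assms(7) fin by (auto intro!: Min_le)
  have N0S: "N0 \<subseteq> S" using assms(10) unfolding is_net_def by blast
  have cov: "\<forall>p\<in>S. \<exists>x\<in>N0. dist p x < \<gamma>" using assms(10) unfolding is_net_def by blast
  have "Inv \<gamma> Sp Sm N0 (2 powr real_of_int 0) N0" unfolding Inv_def by blast
  from Inv_run[OF assms(11) assms(8) _ assms(4) this] N0S assms(3)
  obtain R where I: "Inv \<gamma> Sp Sm N0 R N" by blast
  have NS: "N \<subseteq> Sp \<union> Sm" using I N0S assms(3) unfolding Inv_def by blast
  show ?thesis unfolding consistent_def
  proof (intro ballI allI impI)
    fix s q assume s: "s \<in> Sp \<union> Sm" and nn: "nearest_neighbor N s q"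
    have qN: "q \<in> N" and qmin: "\<And>q'. q' \<in> N \<Longrightarrow> dist s q \<le> dist s q'"
      using nn unfolding nearest_neighbor_def by auto
    have qS: "q \<in> Sp \<union> Sm" using qN NS by blast
    show "(s \<in> Sp \<and> q \<in> Sp) \<or> (s \<in> Sm \<and> q \<in> Sm)"
    proof (rule ccontr)
      assume bad: "\<not> ((s \<in> Sp \<and> q \<in> Sp) \<or> (s \<in> Sm \<and> q \<in> Sm))"
      have sq: "\<gamma> \<le> dist s q"
        using bad s qS marg by (metis Un_iff dist_commute)
      obtain x where x: "x \<in> N0" "dist s x < \<gamma>" using cov s assms(3) by blast
      have xS: "x \<in> Sp \<union> Sm" using x N0S assms(3) by blast
      have xlab: "x \<in> Sp \<longleftrightarrow> s \<in> Sp"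
      proof (rule ccontr)
        assume "\<not> (x \<in> Sp \<longleftrightarrow> s \<in> Sp)"
        then have "\<gamma> \<le> dist s x" using s xS assms(4) marg
          by (metis Un_iff dist_commute)
        with x show False by linarith
      qed
      from I x(1) consider "x \<in> N" | p r where "wit \<gamma> Sp Sm R N x p r"
        unfolding Inv_def by blast
      then show False
      proof cases
        case 1
        with qmin have "dist s q \<le> dist s x" by blast
        with x sq show False by linarith
      next
        case 2
        then have pN: "p \<in> N" and px: "dist p x < r - \<gamma>" and plab: "p \<in> Sp \<longleftrightarrow> x \<in> Sp"
          and opp: "\<forall>q\<in>N \<inter> opposite Sp Sm p. 2 * r \<le> dist p q"
          unfolding wit_def by auto
        have "q \<in> opposite Sp Sm p"
          using bad plab xlab qS s assms(4) unfolding opposite_def by auto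
        with opp qN have pq: "2 * r \<le> dist p q" by blast
        have "dist s p \<le> dist s x + dist x p" by (rule dist_triangle)
        with px have sp: "dist s p < r" using x(2) by (simp add: dist_commute)
        have "dist s q \<le> dist s p" using qmin pN by blast
        moreover have "dist p q \<le> dist p s + dist s q" by (rule dist_triangle)
        ultimately show False using pq sp by (simp add: dist_commute)
      qed
    qed
  qed
qed

end
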